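(* Let $m,n,k$ be positive integers with $k<n$, $A\in\mathbb{R}^{m\times n}$, $x^*\in\mathbb{R}^n$ with support $S^*$ satisfying $1\le|S^*|\le k$, $e\in\mathbb{R}^m$, $y=Ax^*+e$. Let $\mathcal{X}^0\in\mathbb{R}^n$, $\eta>0$, let $(S^t,x^t,\mathcal{X}^t)_{t\ge0}$ be generated by SEA, $b^t=u^t-\eta A^T(Ax^t-y)$ and $B=\sup_{t\in\mathbb{N}}\|b^t\|_\infty$. If $$B<\frac{1}{2\sum_{i\in S^*}\frac{1}{\eta|x^*_i|}},$$ then there exists an integer $t_s\le T'_{max}$ such that $S^*\subseteq S^{t_s}$, where $$T'_{max}=\frac{\sum_{i\in S^*}\frac{\max_{j\notin S^*}|\mathcal{X}^0_j|+|\mathcal{X}^0_i|}{\eta|x^*_i|}+k+1}{1-2B\sum_{i\in S^*}\frac{1}{\eta|x^*_i|}}.$$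
   Context: $S^*=\{i:x^*_i\neq0\}$. For $v\in\mathbb{R}^n$, $\mathrm{largest}_k(v)$ is the set of indices of the $k$ entries of $v$ with largest absolute value (ties broken by selecting the highest indices). For $S\subseteq\{1,\dots,n\}$, $A_S$ is the submatrix of columns indexed by $S$, $v_S$ the restriction of a vector to $S$, $A_S^\dagger$ the Moore–Penrose pseudoinverse of $A_S$. SEA with initialization $\mathcal{X}^0$ and step size $\eta$ generates, for $t=0,1,2,\dots$: $S^t=\mathrm{largest}_k(\mathcal{X}^t)$; $x^t_i=0$ for $i\notin S^t$ and $x^t_{S^t}=A_{S^t}^\dagger y$; $\mathcal{X}^{t+1}=\mathcal{X}^t-\eta A^T(Ax^t-y)$. The oracle direction is $u^t_i=-\eta x^*_i$ if $i\in S^*\setminus S^t$ and $u^t_i=0$ otherwise. *)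

theory Defs
  imports Complex_Main
begin

text \<open>Conventions: indices are 0-based. Vectors in R^n are functions nat => real
  (only entries with index < n matter); an m x n matrix A is a function
  nat => nat => real, entry A i j for i < m, j < n.\<close>

text \<open>largest_k(v): the k indices of largest |v_i| among 0..n-1, ties broken in
  favour of higher indices, i.e. the top k elements for the strict total order
  j above i iff (|v j|, j) > (|v i|, i) lexicographically.\<close>
definition largest :: "nat \<Rightarrow> nat \<Rightarrow> (nat \<Rightarrow> real) \<Rightarrow> nat set" where
  "largest n k v = {i. i < n \<and>
      card {j. j < n \<and> (\<bar>v j\<bar> > \<bar>v i\<bar> \<or> (\<bar>v j\<bar> = \<bar>v i\<bar> \<and> j > i))} < k}"

text \<open>Penrose conditions for G (rows indexed by S, columns by 0..m-1) being the
  Moore-Penrose pseudoinverse of the column submatrix A_S (rows 0..m-1, columns S).\<close>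
definition penrose :: "(nat \<Rightarrow> nat \<Rightarrow> real) \<Rightarrow> nat \<Rightarrow> nat set \<Rightarrow> (nat \<Rightarrow> nat \<Rightarrow> real) \<Rightarrow> bool" where
  "penrose A m S G \<longleftrightarrow>
     (let AG = (\<lambda>i r. \<Sum>l\<in>S. A i l * G l r);
          GA = (\<lambda>l j. \<Sum>r<m. G l r * A r j) in
      (\<forall>i<m. \<forall>j\<in>S. (\<Sum>r<m. AG i r * A r j) = A i j) \<and>
      (\<forall>l\<in>S. \<forall>r<m. (\<Sum>j\<in>S. GA l j * G j r) = G l r) \<and>
      (\<forall>i<m. \<forall>r<m. AG i r = AG r i) \<and>
      (\<forall>l\<in>S. \<forall>j\<in>S. GA l j = GA j l))"

definition pinv_sub :: "(nat \<Rightarrow> nat \<Rightarrow> real) \<Rightarrow> nat \<Rightarrow> nat set \<Rightarrow> (nat \<Rightarrow> nat \<Rightarrow> real)" where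
  "pinv_sub A m S = (THE G. penrose A m S G \<and> (\<forall>l r. (l \<notin> S \<or> m \<le> r) \<longrightarrow> G l r = 0))"

definition sea_x :: "(nat \<Rightarrow> nat \<Rightarrow> real) \<Rightarrow> (nat \<Rightarrow> real) \<Rightarrow> nat \<Rightarrow> nat set \<Rightarrow> nat \<Rightarrow> real" where
  "sea_x A y m S = (\<lambda>j. if j \<in> S then (\<Sum>i<m. pinv_sub A m S j i * y i) else 0)"

definition grad :: "(nat \<Rightarrow> nat \<Rightarrow> real) \<Rightarrow> (nat \<Rightarrow> real) \<Rightarrow> nat \<Rightarrow> nat \<Rightarrow> (nat \<Rightarrow> real) \<Rightarrow> nat \<Rightarrow> real" where
  "grad A y m n x = (\<lambda>j. \<Sum>i<m. A i j * ((\<Sum>l<n. A i l * x l) - y i))"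

primrec sea_X :: "(nat \<Rightarrow> nat \<Rightarrow> real) \<Rightarrow> (nat \<Rightarrow> real) \<Rightarrow> nat \<Rightarrow> nat \<Rightarrow> nat \<Rightarrow> real
                   \<Rightarrow> (nat \<Rightarrow> real) \<Rightarrow> nat \<Rightarrow> nat \<Rightarrow> real" where
  "sea_X A y m n k \<eta> X0 0 = X0"
| "sea_X A y m n k \<eta> X0 (Suc t) =
     (let X = sea_X A y m n k \<eta> X0 t; x = sea_x A y m (largest n k X) in
      (\<lambda>j. X j - \<eta> * grad A y m n x j))"

definition sea_S where
  "sea_S A y m n k \<eta> X0 t = largest n k (sea_X A y m n k \<eta> X0 t)"

definition sea_xt where
  "sea_xt A y m n k \<eta> X0 t = sea_x A y m (sea_S A y m n k \<eta> X0 t)"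

definition oracle_u :: "real \<Rightarrow> (nat \<Rightarrow> real) \<Rightarrow> nat set \<Rightarrow> nat set \<Rightarrow> nat \<Rightarrow> real" where
  "oracle_u \<eta> xs Ss St = (\<lambda>i. if i \<in> Ss - St then - \<eta> * xs i else 0)"

definition supp :: "nat \<Rightarrow> (nat \<Rightarrow> real) \<Rightarrow> nat set" where
  "supp n v = {i. i < n \<and> v i \<noteq> 0}"

definition norm_inf :: "nat \<Rightarrow> (nat \<Rightarrow> real) \<Rightarrow> real" where
  "norm_inf n v = Max ((\<lambda>j. \<bar>v j\<bar>) ` {..<n})"

end

theory Submission
  imports Defs
begin

lemma above_exists:
  assumes "finite S" "card S \<le> k" "i \<in> S" "i < n" "i \<notin> largest n k v"
  shows "\<exists>j<n. j \<notin> S \<and> \<bar>v i\<bar> \<le> \<bar>v j\<bar>"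
proof (rule ccontr)
  assume H: "\<not> ?thesis"
  define Ab where "Ab = {j. j < n \<and> (\<bar>v j\<bar> > \<bar>v i\<bar> \<or> (\<bar>v j\<bar> = \<bar>v i\<bar> \<and> j > i))}"
  have k: "k \<le> card Ab" using assms(4,5) unfolding largest_def Ab_def by auto
  have sub: "Ab \<subseteq> S - {i}"
  proof
    fix j assume "j \<in> Ab"
    then have "j < n" "\<bar>v j\<bar> \<ge> \<bar>v i\<bar>" "j \<noteq> i" unfolding Ab_def by auto
    then show "j \<in> S - {i}" using H by force
  qed
  have "card Ab \<le> card (S - {i})" using sub assms(1) by (simp add: card_mono)
  also have "\<dots> = card S - 1" using assms(1,3) by simp
  finally have "card Ab \<le> card S - 1" .
  moreover have "card S \<ge> 1" using assms(1,3) by (metis card_0_eq empty_iff less_one not_le)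
  ultimately show False using k assms(2) by linarith
qed

theorem theoremC6:
  fixes m n k :: nat and A :: "nat \<Rightarrow> nat \<Rightarrow> real"
    and xs e y X0 :: "nat \<Rightarrow> real" and \<eta> :: real
  assumes "0 < m" "0 < n" "0 < k" "k < n"
    and "1 \<le> card (supp n xs)" "card (supp n xs) \<le> k"
    and "\<forall>i<m. y i = (\<Sum>j<n. A i j * xs j) + e i"
    and "0 < \<eta>"
  defines "b \<equiv> (\<lambda>t. \<lambda>j. oracle_u \<eta> xs (supp n xs) (sea_S A y m n k \<eta> X0 t) j
                         - \<eta> * grad A y m n (sea_xt A y m n k \<eta> X0 t) j)"
  defines "B \<equiv> Sup (range (\<lambda>t. norm_inf n (b t)))"
  defines "\<Sigma> \<equiv> (\<Sum>i\<in>supp n xs. 1 / (\<eta> * \<bar>xs i\<bar>))"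
  defines "Tmax \<equiv> ((\<Sum>i\<in>supp n xs.
                     (Max ((\<lambda>j. \<bar>X0 j\<bar>) ` ({..<n} - supp n xs)) + \<bar>X0 i\<bar>) / (\<eta> * \<bar>xs i\<bar>))
                   + real k + 1) / (1 - 2 * B * \<Sigma>)"
  assumes "bdd_above (range (\<lambda>t. norm_inf n (b t)))"
    and "B < 1 / (2 * \<Sigma>)"
  shows "\<exists>ts::nat. real ts \<le> Tmax \<and> supp n xs \<subseteq> sea_S A y m n k \<eta> X0 ts"
proof (rule ccontr)
  assume NOT: "\<not> ?thesis"
  define S where "S = supp n xs"
  define X where "X = sea_X A y m n k \<eta> X0"
  define St where "St t = sea_S A y m n k \<eta> X0 t" for t
  define M0 where "M0 = Max ((\<lambda>j. \<bar>X0 j\<bar>) ` ({..<n} - S))"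
  define c where "c i = \<eta> * \<bar>xs i\<bar>" for i
  define N where "N i T = (\<Sum>t<T. if i \<notin> St t then 1 else 0 :: real)" for i T
  have finS: "finite S" unfolding S_def supp_def by auto
  have Sn: "i \<in> S \<Longrightarrow> i < n \<and> xs i \<noteq> 0" for i unfolding S_def supp_def by auto
  have cpos: "i \<in> S \<Longrightarrow> c i > 0" for i using Sn[of i] assms(8) unfolding c_def by auto
  have Sne: "S \<noteq> {}" using assms(5) unfolding S_def by auto
  have Spos: "\<Sigma> > 0" unfolding \<Sigma>_def S_def[symmetric] c_def[symmetric]
    using finS Sne cpos by (intro sum_pos) auto
  have D: "2 * B * \<Sigma> < 1" using assms(14) Spos by (simp add: field_simps)
  have Xrec: "X (Suc t) j = X t j + b t j - oracle_u \<eta> xs S (St t) j" for t j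
    by (simp add: X_def b_def St_def sea_xt_def sea_S_def Let_def S_def)
  have XS: "i \<in> S \<Longrightarrow> X T i = X0 i + (\<Sum>t<T. b t i) + \<eta> * xs i * N i T" for i T
  proof (induction T)
    case 0 then show ?case by (simp add: X_def N_def)
  next
    case (Suc T)
    then show ?case by (simp add: Xrec N_def oracle_u_def algebra_simps)
  qed
  have XnS: "i \<notin> S \<Longrightarrow> X T i = X0 i + (\<Sum>t<T. b t i)" for i T
  proof (induction T)
    case 0 then show ?case by (simp add: X_def)
  next
    case (Suc T)
    then show ?case by (simp add: Xrec oracle_u_def algebra_simps)
  qed
  have bB: "j < n \<Longrightarrow> \<bar>b t j\<bar> \<le> B" for t j
  proof -
    assume j: "j < n"
    have "\<bar>b t j\<bar> \<le> norm_inf n (b t)" unfolding norm_inf_def using j by (intro Max_ge) auto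
    also have "\<dots> \<le> B" unfolding B_def using assms(13) by (intro cSup_upper) auto
    finally show ?thesis .
  qed
  have B0: "B \<ge> 0" using bB[of 0 0] assms(2) by linarith
  have sumb: "j < n \<Longrightarrow> \<bar>\<Sum>t<T. b t j\<bar> \<le> real T * B" for j T
  proof -
    assume j: "j < n"
    have "\<bar>\<Sum>t<T. b t j\<bar> \<le> (\<Sum>t<T. \<bar>b t j\<bar>)" by (rule sum_abs)
    also have "\<dots> \<le> (\<Sum>t<T. B)" using bB[OF j] by (intro sum_mono) auto
    finally show ?thesis by simp
  qed
  have cardS: "card S \<le> k" using assms(6) S_def by simp
  have compne: "{..<n} - S \<noteq> {}"
  proof
    assume "{..<n} - S = {}"
    then have "{..<n} \<subseteq> S" by auto
    then have "n \<le> card S" using finS by (metis card_lessThan card_mono)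
    then show False using cardS assms(4) by linarith
  qed
  have M0ge: "j < n \<Longrightarrow> j \<notin> S \<Longrightarrow> \<bar>X0 j\<bar> \<le> M0" for j
    unfolding M0_def by (intro Max_ge) auto
  have M0pos: "M0 \<ge> 0" using compne M0ge by force
  have N0: "N i T \<ge> 0" for i T unfolding N_def by (intro sum_nonneg) auto
  have NSuc: "N i (Suc T) = N i T + (if i \<notin> St T then 1 else 0)" for i T
    unfolding N_def by simp
  have Nbound: "i \<in> S \<Longrightarrow> c i * N i T \<le> M0 + \<bar>X0 i\<bar> + 2 * real T * B + c i" for i T
  proof (induction T)
    case 0 then show ?case using M0pos cpos[of i] by (simp add: N_def)
  next
    case (Suc T)
    note iS = Suc.prems
    show ?case
    proof (cases "i \<in> St T")
      case True
      then show ?thesis using Suc B0 NSuc[of i T] by (simp add: algebra_simps)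
    next
      case False
      have inn: "i < n" using Sn iS by auto
      obtain j where j: "j < n" "j \<notin> S" "\<bar>X T i\<bar> \<le> \<bar>X T j\<bar>"
        using above_exists[OF finS cardS iS inn, of "X T"] False
        unfolding St_def sea_S_def X_def by auto
      have "\<bar>X T j\<bar> \<le> \<bar>X0 j\<bar> + \<bar>\<Sum>t<T. b t j\<bar>" using XnS[OF j(2)] by simp
      also have "\<dots> \<le> M0 + real T * B" using M0ge[OF j(1,2)] sumb[OF j(1), of T] by simp
      finally have up: "\<bar>X T i\<bar> \<le> M0 + real T * B" using j(3) by simp
      have eq: "\<bar>\<eta> * xs i * N i T\<bar> = c i * N i T"
        using N0[of i T] assms(8) unfolding c_def by (simp add: abs_mult)
      have "c i * N i T \<le> \<bar>X T i\<bar> + \<bar>X0 i\<bar> + \<bar>\<Sum>t<T. b t i\<bar>"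
        using XS[OF iS, of T] eq by linarith
      then have "c i * N i T \<le> M0 + \<bar>X0 i\<bar> + 2 * real T * B"
        using up sumb[OF inn, of T] by linarith
      then show ?thesis using NSuc[of i T] False B0 by (simp add: algebra_simps)
    qed
  qed
  have Ndiv: "i \<in> S \<Longrightarrow> N i T \<le> (M0 + \<bar>X0 i\<bar>) / c i + 2 * real T * B * (1 / c i) + 1" for i T
  proof -
    assume iS: "i \<in> S"
    have "N i T \<le> (M0 + \<bar>X0 i\<bar> + 2 * real T * B + c i) / c i"
      using Nbound[OF iS, of T] cpos[OF iS] by (simp add: pos_le_divide_eq mult.commute)
    also have "\<dots> = (M0 + \<bar>X0 i\<bar>) / c i + 2 * real T * B * (1 / c i) + 1"
      using cpos[OF iS] by (simp add: field_simps)
    finally show ?thesis .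
  qed
  define C where "C = (\<Sum>i\<in>S. (M0 + \<bar>X0 i\<bar>) / c i)"
  have sumN: "(\<Sum>i\<in>S. N i T) \<le> C + 2 * real T * B * \<Sigma> + real (card S)" for T
  proof -
    have "(\<Sum>i\<in>S. N i T) \<le> (\<Sum>i\<in>S. (M0 + \<bar>X0 i\<bar>) / c i + 2 * real T * B * (1 / c i) + 1)"
      using Ndiv by (intro sum_mono) auto
    also have "\<dots> = C + 2 * real T * B * \<Sigma> + real (card S)"
      unfolding C_def \<Sigma>_def S_def[symmetric] c_def[symmetric]
      by (simp add: sum.distrib sum_distrib_left)
    finally show ?thesis .
  qed
  have count: "(\<forall>t<T. \<not> S \<subseteq> St t) \<Longrightarrow> real T \<le> (\<Sum>i\<in>S. N i T)" for T
  proof (induction T)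
    case 0 then show ?case by (simp add: N_def)
  next
    case (Suc T)
    then have IH: "real T \<le> (\<Sum>i\<in>S. N i T)" by auto
    from Suc.prems obtain i where i: "i \<in> S" "i \<notin> St T" by auto
    have "1 \<le> (\<Sum>i\<in>S. (if i \<notin> St T then 1 else 0 :: real))"
    proof -
      have "(if i \<notin> St T then 1 else 0 :: real) \<le> (\<Sum>i\<in>S. (if i \<notin> St T then 1 else 0 :: real))"
        using finS i(1) by (intro member_le_sum) auto
      then show ?thesis using i(2) by simp
    qed
    then show ?case using IH by (simp add: NSuc sum.distrib)
  qed
  have Tpos: "Tmax \<ge> 0"
  proof -
    have "C \<ge> 0" unfolding C_def using M0pos cpos by (intro sum_nonneg) (simp add: less_imp_le)
    moreover have "Tmax = (C + real k + 1) / (1 - 2 * B * \<Sigma>)"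
      unfolding Tmax_def C_def M0_def S_def c_def by simp
    ultimately show ?thesis using D by simp
  qed
  define T where "T = nat \<lfloor>Tmax\<rfloor> + 1"
  have TT: "real T > Tmax" unfolding T_def using Tpos by linarith
  have fail: "\<forall>t<T. \<not> S \<subseteq> St t"
  proof (intro allI impI)
    fix t assume "t < T"
    then have "t \<le> nat \<lfloor>Tmax\<rfloor>" unfolding T_def by simp
    then have "int t \<le> \<lfloor>Tmax\<rfloor>" using Tpos by linarith
    then have "real t \<le> Tmax" by linarith
    then show "\<not> S \<subseteq> St t" using NOT unfolding S_def St_def by auto
  qed
  have "real T \<le> C + 2 * real T * B * \<Sigma> + real (card S)"
    using count[OF fail] sumN[of T] by linarith
  then have "real T * (1 - 2 * B * \<Sigma>) \<le> C + real k" using cardS by (simp add: algebra_simps)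
  moreover have "Tmax = (C + real k + 1) / (1 - 2 * B * \<Sigma>)"
    unfolding Tmax_def C_def M0_def S_def c_def by simp
  ultimately have "real T * (1 - 2 * B * \<Sigma>) < Tmax * (1 - 2 * B * \<Sigma>)" using D by simp
  then have "real T < Tmax" using D by (simp add: mult_less_cancel_right)
  then show False using TT by simp
qed

end
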